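(* There is an absolute constant $K$ such that the following holds. Let $n \ge 1$ and $0 \le c < n$ be integers, and let $(h(i))_{i \ge 0}$ be a Fibonacci-automatic sequence generated by a Fibonacci-DFAO with $m$ states. Then there is a Fibonacci-DFAO with at most $K m^2 n^4$ states generating the linear subsequence $(h(ni+c))_{i \ge 0}$.
   Context: Fibonacci numbers $F_0=0,F_1=1,F_k=F_{k-1}+F_{k-2}$; for a binary word $x=x_1\cdots x_\ell$, $[x]=\sum_j x_j F_{\ell-j+2}$; a valid Fibonacci representation is a binary word with no factor $11$ (leading zeros allowed). A Fibonacci-DFAO is a deterministic finite automaton with output $(Q,\{0,1\},\delta,q_0,\Delta,\tau)$ (partial $\delta$ allowed) reading valid Fibonacci representations most significant digit first, with output independent of leading zeros; it generates $(h(i))_{i\ge0}$ if $h(i)=\tau(\delta(q_0,x))$ for every valid $x$ with $[x]=i$. A sequence is Fibonacci-automatic if some Fibonacci-DFAO generates it. *)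

theory Defs
  imports "HOL-Number_Theory.Fib"
begin

(* Binary words: True = digit 1, False = digit 0, most significant digit first. *)

definition fib_val :: "bool list \<Rightarrow> nat" where
  "fib_val x = (\<Sum>j<length x. (if x ! j then fib (length x - j + 1) else 0))"

definition fib_valid :: "bool list \<Rightarrow> bool" where
  "fib_valid x \<longleftrightarrow> (\<forall>i. Suc i < length x \<longrightarrow> \<not> (x ! i \<and> x ! Suc i))"

fun run :: "('q \<Rightarrow> bool \<Rightarrow> 'q option) \<Rightarrow> 'q \<Rightarrow> bool list \<Rightarrow> 'q option" where
  "run \<delta> q [] = Some q"
| "run \<delta> q (a # w) = (case \<delta> q a of None \<Rightarrow> None | Some q' \<Rightarrow> run \<delta> q' w)"

definition fib_dfao :: "'q set \<Rightarrow> ('q \<Rightarrow> bool \<Rightarrow> 'q option) \<Rightarrow> 'q \<Rightarrow> ('q \<Rightarrow> 'o) \<Rightarrow> bool" where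
  "fib_dfao Q \<delta> q0 \<tau> \<longleftrightarrow>
     finite Q \<and> q0 \<in> Q \<and>
     (\<forall>q\<in>Q. \<forall>a q'. \<delta> q a = Some q' \<longrightarrow> q' \<in> Q) \<and>
     (\<forall>x k. fib_valid x \<longrightarrow>
        map_option \<tau> (run \<delta> q0 (replicate k False @ x)) = map_option \<tau> (run \<delta> q0 x))"

definition fib_generates :: "('q \<Rightarrow> bool \<Rightarrow> 'q option) \<Rightarrow> 'q \<Rightarrow> ('q \<Rightarrow> 'o) \<Rightarrow> (nat \<Rightarrow> 'o) \<Rightarrow> bool" where
  "fib_generates \<delta> q0 \<tau> h \<longleftrightarrow>
     (\<forall>x. fib_valid x \<longrightarrow> map_option \<tau> (run \<delta> q0 x) = Some (h (fib_val x)))"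

end

theory Submission
  imports Defs "HOL-Library.Countable"
begin

declare fib.simps(3)[simp del]
lemma fib_SS0[simp]: "fib (Suc (Suc 0)) = 1" by (simp add: fib.simps)
lemma fib_S3[simp]: "fib (Suc (Suc (Suc 0))) = 2" by (simp add: fib.simps)

definition fvp :: "bool list \<Rightarrow> nat" where
  "fvp x = (\<Sum>j<length x. (if x ! j then fib (length x - j) else 0))"

lemma fib_val_Nil[simp]: "fib_val [] = 0" by (simp add: fib_val_def)
lemma fvp_Nil[simp]: "fvp [] = 0" by (simp add: fvp_def)

lemma fib_val_Cons: "fib_val (a # x) = (if a then fib (length x + 2) else 0) + fib_val x"
  unfolding fib_val_def length_Cons sum.lessThan_Suc_shift by (auto intro!: sum.cong)

lemma fvp_Cons: "fvp (a # x) = (if a then fib (length x + 1) else 0) + fvp x"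
  unfolding fvp_def length_Cons sum.lessThan_Suc_shift by (auto intro!: sum.cong)

lemma fib_val_append:
  "fib_val (x @ y) = fib_val x * fib (length y + 1) + fvp x * fib (length y) + fib_val y"
proof (induction x)
  case Nil then show ?case by simp
next
  case (Cons a x)
  have f: "fib (Suc (Suc (length x + length y))) = fib (Suc (Suc (length x))) * fib (Suc (length y)) + fib (Suc (length x)) * fib (length y)"
    using fib_add[of "length y" "length x + 1"] by (simp add: ac_simps)
  show ?case using Cons by (simp add: fib_val_Cons fvp_Cons f algebra_simps)
qed

lemma fvp_snoc: "fvp (x @ [a]) = fib_val x + (if a then 1 else 0)"
  by (induction x) (auto simp: fvp_Cons fib_val_Cons)

lemma fib_val_snoc: "fib_val (x @ [a]) = fib_val x + fvp x + (if a then 1 else 0)"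
  using fib_val_append[of x "[a]"] by (simp add: fib_val_Cons)

lemma fib_valid_Nil[simp]: "fib_valid []" by (simp add: fib_valid_def)

lemma fib_valid_Cons: "fib_valid (a # x) \<longleftrightarrow> fib_valid x \<and> \<not> (a \<and> x \<noteq> [] \<and> hd x)"
proof
  assume H: "fib_valid (a # x)"
  have "fib_valid x" unfolding fib_valid_def
  proof (intro allI impI)
    fix i assume "Suc i < length x"
    then show "\<not> (x ! i \<and> x ! Suc i)" using H[unfolded fib_valid_def, rule_format, of "Suc i"] by simp
  qed
  moreover have "\<not> (a \<and> x \<noteq> [] \<and> hd x)"
    using H[unfolded fib_valid_def, rule_format, of 0] by (cases x) auto
  ultimately show "fib_valid x \<and> \<not> (a \<and> x \<noteq> [] \<and> hd x)" by blast
next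
  assume H: "fib_valid x \<and> \<not> (a \<and> x \<noteq> [] \<and> hd x)"
  show "fib_valid (a # x)" unfolding fib_valid_def
  proof (intro allI impI)
    fix i assume i: "Suc i < length (a # x)"
    show "\<not> ((a # x) ! i \<and> (a # x) ! Suc i)"
    proof (cases i)
      case 0 then show ?thesis using H i by (cases x) auto
    next
      case (Suc i') then show ?thesis using H i unfolding fib_valid_def by auto
    qed
  qed
qed

lemma fib_valid_append:
  "fib_valid (x @ y) \<longleftrightarrow> fib_valid x \<and> fib_valid y \<and> \<not> (x \<noteq> [] \<and> last x \<and> y \<noteq> [] \<and> hd y)"
  by (induction x) (auto simp: fib_valid_Cons)

lemma rep0_valid[simp]: "fib_valid (replicate i False @ x) = fib_valid x"
  by (induction i) (auto simp: fib_valid_Cons)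

lemma rep0_val[simp]: "fib_val (replicate i False @ x) = fib_val x"
  by (induction i) (auto simp: fib_val_Cons)

lemma rep_exists: "N < fib (L + 2) \<Longrightarrow> \<exists>x. length x = L \<and> fib_valid x \<and> fib_val x = N"
proof (induction L arbitrary: N rule: less_induct)
  case (less L)
  show ?case
  proof (cases L)
    case 0 then show ?thesis using less by (intro exI[of _ "[]"]) (simp add: numeral_2_eq_2)
  next
    case (Suc l)
    show ?thesis
    proof (cases "N < fib (l + 2)")
      case True
      then obtain y where y: "length y = l" "fib_valid y" "fib_val y = N" using less Suc by auto
      show ?thesis using y Suc
        by (intro exI[of _ "False # y"]) (simp add: fib_valid_Cons fib_val_Cons)
    next
      case False
      show ?thesis
      proof (cases l)
        case 0
        then have "N = 1" using False less Suc by (simp add: numeral_3_eq_3 numeral_2_eq_2) 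
        then show ?thesis using Suc 0
          by (intro exI[of _ "[True]"]) (simp add: fib_valid_Cons fib_val_Cons numeral_2_eq_2)
      next
        case (Suc l')
        have "fib (L + 2) = fib (l + 2) + fib (l' + 2)"
          using \<open>L = Suc l\<close> Suc fib_plus_2[of "l' + 2"] by (simp add: ac_simps)
        then have "N - fib (l + 2) < fib (l' + 2)" using False less by linarith
        then obtain y where y: "length y = l'" "fib_valid y" "fib_val y = N - fib (l + 2)"
          using less.IH[of l' "N - fib (l + 2)"] \<open>L = Suc l\<close> Suc by auto
        show ?thesis using y Suc \<open>L = Suc l\<close> False
          by (intro exI[of _ "True # False # y"]) (simp add: fib_valid_Cons fib_val_Cons)
      qed
    qed
  qed
qed

lemma val_bound_aux:
  "fib_valid x \<Longrightarrow> fib_val x < fib (length x + 2) \<and> (x \<noteq> [] \<and> \<not> hd x \<longrightarrow> fib_val x < fib (length x + 1))"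
proof (induction x)
  case Nil then show ?case by simp
next
  case (Cons a x)
  show ?case
  proof (cases a)
    case False
    then show ?thesis using Cons fib_Suc_mono[of "Suc (Suc (length x))"]
      by (auto simp: fib_valid_Cons fib_val_Cons)
  next
    case True
    show ?thesis
    proof (cases x)
      case Nil then show ?thesis using True by (simp add: fib_val_Cons numeral_3_eq_3 numeral_2_eq_2)
    next
      case (Cons b y)
      then have "\<not> b" "fib_valid x" using True \<open>fib_valid (a # x)\<close> by (auto simp: fib_valid_Cons)
      then have "fib_val x < fib (length x + 1)" using Cons.IH Cons by simp
      moreover have "fib (Suc (Suc (Suc (length x)))) = fib (Suc (Suc (length x))) + fib (Suc (length x))"
        by (simp add: fib.simps)
      ultimately show ?thesis using True by (simp add: fib_val_Cons)
    qed
  qed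
qed

lemma val_bound: "fib_valid x \<Longrightarrow> fib_val x < fib (length x + 2)"
  using val_bound_aux by blast



definition phi :: real where "phi = (1 + sqrt 5) / 2"

lemma phi_sq: "phi * phi = phi + 1"
  unfolding phi_def by (simp add: field_simps)

lemma phi_bounds: "1.6 < phi" "phi < 1.7"
proof -
  have "2.2 < sqrt 5" by (rule real_less_rsqrt) (simp add: power2_eq_square)
  moreover have "sqrt 5 < 2.4"
  proof -
    have "sqrt 5 < sqrt (2.4^2)" by (subst real_sqrt_less_iff) (simp add: power2_eq_square)
    then show ?thesis by simp
  qed
  ultimately show "1.6 < phi" "phi < 1.7" unfolding phi_def by auto
qed

definition err :: "bool list \<Rightarrow> real" where
  "err x = real (fib_val x) - phi * real (fvp x)"

lemma err_snoc: "err (x @ [a]) = (1 - phi) * (err x + (if a then 1 else 0))"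
proof -
  have "err (x @ [a]) = real (fib_val x) + real (fvp x) + (if a then 1 else 0) - phi * (real (fib_val x) + (if a then 1 else 0))"
    unfolding err_def fib_val_snoc fvp_snoc by simp
  also have "\<dots> = (1 - phi) * (err x + (if a then 1 else 0))"
    unfolding err_def using phi_sq
      mult.assoc[of phi phi "real (fvp x)", symmetric] by (simp add: algebra_simps)
  finally show ?thesis .
qed

lemma err_bounds:
  "fib_valid x \<Longrightarrow> (if x \<noteq> [] \<and> last x then -1 < err x \<and> err x < phi - 2 else phi - 2 < err x \<and> err x < phi - 1)"
proof (induction x rule: rev_induct)
  case Nil then show ?case using phi_bounds by (simp add: err_def)
next
  case (snoc a x)
  have vx: "fib_valid x" and na: "\<not> (x \<noteq> [] \<and> last x \<and> a)"
    using snoc.prems by (auto simp: fib_valid_append fib_valid_Cons)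
  have IH: "-1 < err x" "err x < phi - 1" using snoc.IH[OF vx] phi_bounds by (auto split: if_splits)
  have neg: "1 - phi < 0" using phi_bounds by simp
  show ?case
  proof (cases a)
    case False
    have "(1 - phi) * (phi - 1) < (1 - phi) * err x" by (rule mult_strict_left_mono_neg[OF IH(2) neg])
    moreover have "(1 - phi) * err x < (1 - phi) * (-1)" by (rule mult_strict_left_mono_neg[OF IH(1) neg])
    moreover have "(1 - phi) * (phi - 1) = phi - 2" using phi_sq by (simp add: algebra_simps)
    ultimately show ?thesis using False by (simp add: err_snoc)
  next
    case True
    then have I: "phi - 2 < err x" "err x < phi - 1" using snoc.IH[OF vx] na by (auto split: if_splits)
    have "(1 - phi) * phi < (1 - phi) * (err x + 1)" by (rule mult_strict_left_mono_neg) (use I neg in auto)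
    moreover have "(1 - phi) * (err x + 1) < (1 - phi) * (phi - 1)" by (rule mult_strict_left_mono_neg) (use I neg in auto)
    moreover have "(1 - phi) * (phi - 1) = phi - 2" using phi_sq by (simp add: algebra_simps)
    moreover have "(1 - phi) * phi = -1" using phi_sq by (simp add: algebra_simps)
    ultimately show ?thesis using True by (simp add: err_snoc)
  qed
qed

lemma err_bounds':
  assumes "fib_valid x" shows "-1 < err x" "err x < phi - 1"
  using err_bounds[OF assms] phi_bounds by (auto split: if_splits)

lemma err_last: "fib_valid x \<Longrightarrow> x \<noteq> [] \<Longrightarrow> last x \<Longrightarrow> err x < phi - 2"
  using err_bounds[of x] by auto

lemma err_notlast: "fib_valid x \<Longrightarrow> \<not> (x \<noteq> [] \<and> last x) \<Longrightarrow> err x < phi - 1"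
  using err_bounds[of x] by auto



lemma run_append: "run \<delta> q (x @ y) = (case run \<delta> q x of None \<Rightarrow> None | Some q' \<Rightarrow> run \<delta> q' y)"
  by (induction x arbitrary: q) (auto split: option.splits)

lemma run_in_Q: "(\<forall>q\<in>Q. \<forall>a q'. \<delta> q a = Some q' \<longrightarrow> q' \<in> Q) \<Longrightarrow> q \<in> Q \<Longrightarrow> run \<delta> q x = Some q' \<Longrightarrow> q' \<in> Q"
  by (induction x arbitrary: q) (auto split: option.splits)

lemma fib_val_replicate[simp]: "fib_val (replicate i False) = 0"
  using rep0_val[of i "[]"] by simp

lemma fib_valid_replicate[simp]: "fib_valid (replicate i False)"
  using rep0_valid[of i "[]"] by simp

lemma fvp_replicate[simp]: "fvp (replicate i False) = 0"
  by (induction i) (auto simp: fvp_Cons)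

declare replicate_Suc[simp del]

lemma fib_ge: "Suc m \<le> fib (Suc (Suc m))"
proof (induction m)
  case 0 then show ?case by simp
next
  case (Suc m)
  have "fib (Suc (Suc (Suc m))) = fib (Suc (Suc m)) + fib (Suc m)" by (simp add: fib.simps)
  moreover have "0 < fib (Suc m)" by (rule fib_neq_0_nat) simp
  ultimately show ?case using Suc by simp
qed

lemma exists_rep_any: "\<exists>x. fib_valid x \<and> fib_val x = N"
proof -
  have "N < fib (N + 2)" using fib_ge[of N] by simp
  then show ?thesis using rep_exists by blast
qed

lemma succ_word:
  assumes vP: "fib_valid P"
  shows "\<exists>P2 e. fib_valid P2 \<and> fib_val P2 = fib_val P + 1 \<and> fvp P2 = fvp P + (if e then 1 else 0) \<and>
     (P \<noteq> [] \<and> last P \<longrightarrow> \<not> e)"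
proof -
  obtain P2 where P2: "fib_valid P2" "fib_val P2 = fib_val P + 1" using exists_rep_any by blast
  define d where "d = int (fvp P2) - int (fvp P)"
  have key: "phi * real_of_int d = 1 - err P2 + err P"
    unfolding err_def d_def P2(2) by (simp add: algebra_simps)
  have a1: "-1 < err P" "err P < phi - 1" using err_bounds'[OF vP] by auto
  have a2: "-1 < err P2" "err P2 < phi - 1" using err_bounds'[OF P2(1)] by auto
  have d0: "0 \<le> d"
  proof (rule ccontr)
    assume "\<not> 0 \<le> d"
    then have "real_of_int d \<le> -1" by simp
    then have "phi * real_of_int d \<le> phi * (-1)" using phi_bounds by (intro mult_left_mono) auto
    then show False using key a1 a2 by simp
  qed
  have d1: "d \<le> 1"
  proof (rule ccontr)
    assume "\<not> d \<le> 1"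
    then have "2 \<le> real_of_int d" by simp
    then have "phi * 2 \<le> phi * real_of_int d" using phi_bounds by (intro mult_left_mono) auto
    then show False using key a1 a2 phi_bounds by simp
  qed
  have d2: "P \<noteq> [] \<and> last P \<longrightarrow> d = 0"
  proof
    assume "P \<noteq> [] \<and> last P"
    then have "err P < phi - 2" using err_last[OF vP] by blast
    show "d = 0"
    proof (rule ccontr)
      assume "d \<noteq> 0"
      then have "1 \<le> real_of_int d" using d0 by simp
      then have "phi * 1 \<le> phi * real_of_int d" using phi_bounds by (intro mult_left_mono) auto
      then show False using key a2 \<open>err P < phi - 2\<close> by simp
    qed
  qed
  show ?thesis
  proof (intro exI conjI)
    show "fib_valid P2" "fib_val P2 = fib_val P + 1" by (fact P2)+
    show "fvp P2 = fvp P + (if d = 1 then 1 else 0)" using d0 d1 unfolding d_def by auto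
    show "P \<noteq> [] \<and> last P \<longrightarrow> \<not> d = 1" using d2 by auto
  qed
qed

locale fsetup =
  fixes Q :: "nat set" and \<delta> :: "nat \<Rightarrow> bool \<Rightarrow> nat option" and q0 :: nat
    and \<tau> :: "nat \<Rightarrow> 'o" and h :: "nat \<Rightarrow> 'o" and n c j :: nat
  assumes dfao: "fib_dfao Q \<delta> q0 \<tau>" and gen: "fib_generates \<delta> q0 \<tau> h"
    and n1: "1 \<le> n" and cn: "c < n" and j1: "3 * n \<le> fib j" and j2: "fib j \<le> 6 * n"
begin

definition gfun :: "bool list \<Rightarrow> bool list \<Rightarrow> 'o option" where
  "gfun w = (\<lambda>u. if fib_valid (w @ u) then Some (h (n * fib_val (w @ u) + c)) else None)"

definition rep :: "nat \<Rightarrow> nat \<Rightarrow> bool list" where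
  "rep L N = (SOME x. length x = L \<and> fib_valid x \<and> fib_val x = N)"

lemma rep_prop: "N < fib (L + 2) \<Longrightarrow> length (rep L N) = L \<and> fib_valid (rep L N) \<and> fib_val (rep L N) = N"
  unfolding rep_def by (rule someI_ex) (rule rep_exists)

definition Gf :: "nat \<times> nat \<times> bool \<times> bool \<times> bool \<times> nat \<times> nat \<Rightarrow> bool list \<Rightarrow> 'o option" where
  "Gf t u = (case t of (qP, qP2, bP, e, bw, D1, D2) \<Rightarrow>
     if fib_valid u \<and> \<not> (bw \<and> u \<noteq> [] \<and> hd u) then
       (let r = length u; L = Suc j + r;
            Off = D1 * (fib (Suc r) - fib r) + D2 * fib r + n * fib_val u + c
        in if Off < (if bP then fib (Suc L) else fib (Suc (Suc L)))
           then map_option \<tau> (run \<delta> qP (if bP then False # rep (L - 1) Off else rep L Off))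
           else map_option \<tau> (run \<delta> qP2 (False # rep (L - 1) (Off - (fib (Suc L) + (if e then fib L else 0))))))
     else None)"

definition S :: "(nat \<times> nat \<times> bool \<times> bool \<times> bool \<times> nat \<times> nat) set" where
  "S = Q \<times> Q \<times> UNIV \<times> UNIV \<times> UNIV \<times> {..2 * fib (j + 2)} \<times> {..2 * fib (j + 3)}"

lemma closure: "\<forall>q\<in>Q. \<forall>a q'. \<delta> q a = Some q' \<longrightarrow> q' \<in> Q" and q0Q: "q0 \<in> Q" and finQ: "finite Q"
  using dfao unfolding fib_dfao_def by auto

lemma run_valid: "fib_valid x \<Longrightarrow> \<exists>q. run \<delta> q0 x = Some q \<and> q \<in> Q \<and> map_option \<tau> (run \<delta> q0 x) = Some (h (fib_val x))"
proof -
  assume "fib_valid x"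
  then have E: "map_option \<tau> (run \<delta> q0 x) = Some (h (fib_val x))" using gen unfolding fib_generates_def by blast
  then obtain q where q: "run \<delta> q0 x = Some q" by (cases "run \<delta> q0 x") auto
  then have "q \<in> Q" using run_in_Q[OF closure q0Q] by blast
  then show ?thesis using q E by blast
qed


lemma choose_P:
  assumes vw: "fib_valid w" and a1: "1 \<le> fib_val w"
  shows "\<exists>P D1 D2. fib_valid P \<and>
     int D1 = int (n * fib_val w) - int (fib_val (P @ replicate (Suc j) False)) \<and>
     n * fib_val (w @ [False]) = fib_val (P @ replicate (Suc (Suc j)) False) + D2 \<and>
     D1 + n \<le> 2 * fib (j + 2) \<and> D2 + 2 * n \<le> 2 * fib (j + 3)"
proof -
  define a where "a = fib_val w"
  define b where "b = fvp w"
  define N2 where "N2 = n * fib_val (w @ [False])"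
  have N2e: "N2 = n * a + n * b" unfolding N2_def a_def b_def fib_val_snoc by (simp add: algebra_simps)
  have "n \<le> N2" unfolding N2e using a1 n1 unfolding a_def
    by (metis le_add1 le_trans mult.right_neutral mult_le_mono2)
  obtain x0 where x0: "fib_valid x0" "fib_val x0 = N2 - n" using exists_rep_any by blast
  define x where "x = replicate (Suc (Suc j)) False @ x0"
  have x: "fib_valid x" "fib_val x = N2 - n" "Suc (Suc j) \<le> length x"
    unfolding x_def using x0 by (simp_all only: rep0_valid rep0_val) simp
  define P where "P = take (length x - Suc (Suc j)) x"
  define s0 where "s0 = drop (length x - Suc (Suc j)) x"
  have xPs: "x = P @ s0" unfolding P_def s0_def by simp
  have ls0: "length s0 = Suc (Suc j)" unfolding s0_def using x(3) by simp
  have vP: "fib_valid P" and vs0: "fib_valid s0" using x(1) unfolding xPs fib_valid_append by auto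
  have bs0: "fib_val s0 < fib (j + 4)" using val_bound[OF vs0] ls0 by (simp add: numeral_eq_Suc)
  define X1 where "X1 = fib_val (P @ replicate (Suc j) False)"
  define X2 where "X2 = fib_val (P @ replicate (Suc (Suc j)) False)"
  define P0 where "P0 = P @ replicate (Suc j) False"
  have X2e: "X2 = X1 + fvp P0"
  proof -
    have "P @ replicate (Suc (Suc j)) False = P0 @ [False]" unfolding P0_def
      by (simp add: replicate_append_same[symmetric] replicate_Suc)
    then show ?thesis unfolding X2_def X1_def P0_def[symmetric] by (simp add: fib_val_snoc)
  qed
  have vP0: "fib_valid P0" unfolding P0_def using vP by (simp add: fib_valid_append del: replicate_Suc)
  have xv: "fib_val x = X2 + fib_val s0" unfolding xPs X2_def fib_val_append ls0 by simp
  define D2 where "D2 = n + fib_val s0"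
  have N2D2: "N2 = X2 + D2" using x(2) xv \<open>n \<le> N2\<close> unfolding D2_def by linarith
  define D1 where "D1 = int (n * a) - int X1"
  have ew: "err w = real a - phi * real b" unfolding err_def a_def b_def by simp
  have eP: "err P0 = real X1 - phi * (real X2 - real X1)" unfolding err_def X1_def P0_def[symmetric] X2e
    by simp
  have ident: "(phi + 1) * real_of_int D1 = phi * real D2 + real n * err w - err P0"
  proof -
    have "real N2 = real X2 + real D2" using N2D2 by simp
    moreover have "real N2 = real n * real a + real n * real b" using N2e by simp
    ultimately have D2r: "real D2 = real n * real a + real n * real b - real X2" by simp
    show ?thesis unfolding D1_def ew eP D2r by (simp add: algebra_simps)
  qed
  have w1: "-1 < err w" "err w < phi - 1" using err_bounds'[OF vw] by auto
  have p1: "-1 < err P0" "err P0 < phi - 1" using err_bounds'[OF vP0] by auto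
  have nw1: "- real n < real n * err w" using w1(1) n1 by (simp add: mult_strict_left_mono[of "-1" _ "real n", simplified])
  have nw2: "real n * err w < real n * (phi - 1)" using w1(2) n1 by (simp add: mult_strict_left_mono)
  have D2n: "real n \<le> real D2" unfolding D2_def by simp
  have pD2: "phi * real n \<le> phi * real D2" using D2n phi_bounds by (simp add: mult_left_mono)
  define y where "y = [True] @ replicate (Suc (Suc j)) False"
  have vy: "fib_valid y" unfolding y_def by (simp add: fib_valid_Cons)
  have yl: "\<not> (y \<noteq> [] \<and> last y)" unfolding y_def by simp
  have yv: "fib_val y = fib (j + 4)" unfolding y_def by (simp add: fib_val_Cons numeral_eq_Suc)
  have yv': "fvp y = fib (j + 3)" unfolding y_def by (simp add: fvp_Cons numeral_eq_Suc)
  have F4: "real (fib (j + 4)) < phi * real (fib (j + 3)) + phi - 1"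
    using err_notlast[OF vy yl] unfolding err_def yv yv' by simp
  have D2u: "real D2 \<le> real n + real (fib (j + 4)) - 1" unfolding D2_def using bs0 by linarith
  have pD2u: "phi * real D2 \<le> phi * (real n + real (fib (j + 4)) - 1)"
    using D2u phi_bounds by (simp add: mult_left_mono)
  have pF4: "phi * real (fib (j + 4)) < phi * (phi * real (fib (j + 3)) + phi - 1)"
    using F4 phi_bounds by (simp add: mult_strict_left_mono)
  have pp: "phi * (phi * real (fib (j + 3)) + phi - 1) = (phi + 1) * real (fib (j + 3)) + 1"
    using phi_sq by (simp add: algebra_simps mult.assoc[symmetric])
  have upper: "(phi + 1) * real_of_int D1 < (phi + 1) * (real (fib (j + 3)) + 2 * real n)"
  proof -
    have e1: "phi * (real n + real (fib (j + 4)) - 1) = phi * real n + phi * real (fib (j + 4)) - phi"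
      by (simp add: algebra_simps)
    have e2: "(phi + 1) * (real (fib (j + 3)) + 2 * real n) = phi * real (fib (j + 3)) + real (fib (j + 3)) + 2 * (phi * real n) + 2 * real n"
      by (simp add: algebra_simps)
    have e3: "real n * (phi - 1) = phi * real n - real n" by (simp add: algebra_simps)
    have e4: "(phi + 1) * real (fib (j + 3)) = phi * real (fib (j + 3)) + real (fib (j + 3))"
      by (simp add: algebra_simps)
    have nn: "1 \<le> real n" using n1 by simp
    show ?thesis unfolding e2 ident using pD2u e1 pF4 pp e4 nw2 e3 p1 nn phi_bounds by linarith
  qed
  have lower: "(phi + 1) * 0 < (phi + 1) * real_of_int D1"
  proof -
    have "(phi - 1) * (real n - 1) \<ge> 0" using phi_bounds n1 by (intro mult_nonneg_nonneg) auto
    then have "phi * real n - real n - phi + 1 \<ge> 0" by (simp add: algebra_simps)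
    then show ?thesis unfolding ident using pD2 nw1 p1 by linarith
  qed
  have pos: "0 < phi + 1" using phi_bounds by simp
  have D1u: "real_of_int D1 < real (fib (j + 3)) + 2 * real n" using upper pos by simp
  have D1l: "0 < D1"
  proof -
    have "0 < real_of_int D1" using lower pos by (simp add: zero_less_mult_iff)
    then show ?thesis by simp
  qed
  have f3: "fib (j + 3) = fib (j + 2) + fib (j + 1)" and f2: "fib (j + 2) = fib (j + 1) + fib j"
    and f4: "fib (j + 4) = fib (j + 3) + fib (j + 2)"
    by (simp_all add: fib.simps numeral_eq_Suc)
  have fjm: "fib j \<le> fib (j + 1)" by (rule fib_mono) simp
  show ?thesis
  proof (intro exI conjI)
    show "fib_valid P" by (rule vP)
    show "int (nat D1) = int (n * fib_val w) - int (fib_val (P @ replicate (Suc j) False))"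
      using D1l unfolding D1_def a_def X1_def by simp
    show "n * fib_val (w @ [False]) = fib_val (P @ replicate (Suc (Suc j)) False) + D2"
      using N2D2 unfolding N2_def X2_def by simp
    show "nat D1 + n \<le> 2 * fib (j + 2)"
    proof -
      have "D1 < int (fib (j + 3)) + 2 * int n" using D1u by linarith
      then show ?thesis using D1l f3 f2 j1 fjm by linarith
    qed
    show "D2 + 2 * n \<le> 2 * fib (j + 3)"
      using bs0 f4 f3 f2 j1 fjm unfolding D2_def by linarith
  qed
qed


lemma main:
  assumes vw: "fib_valid w" and a1: "1 \<le> fib_val w"
  shows "\<exists>t\<in>S. gfun w = Gf t"
proof -
  obtain P D1 D2 where P: "fib_valid P"
    and D1e: "int D1 = int (n * fib_val w) - int (fib_val (P @ replicate (Suc j) False))"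
    and D2e: "n * fib_val (w @ [False]) = fib_val (P @ replicate (Suc (Suc j)) False) + D2"
    and D1b: "D1 + n \<le> 2 * fib (j + 2)" and D2b: "D2 + 2 * n \<le> 2 * fib (j + 3)"
    using choose_P[OF vw a1] by blast
  obtain P2 e where P2: "fib_valid P2" "fib_val P2 = fib_val P + 1"
    "fvp P2 = fvp P + (if e then 1 else 0)" "P \<noteq> [] \<and> last P \<longrightarrow> \<not> e"
    using succ_word[OF P] by blast
  obtain qP where qP: "run \<delta> q0 P = Some qP" "qP \<in> Q" using run_valid[OF P] by blast
  obtain qP2 where qP2: "run \<delta> q0 P2 = Some qP2" "qP2 \<in> Q" using run_valid[OF P2(1)] by blast
  define bP where "bP = (P \<noteq> [] \<and> last P)"
  define bw where "bw = (w \<noteq> [] \<and> last w)"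
  define t where "t = (qP, qP2, bP, e, bw, D1, D2)"
  have tS: "t \<in> S" unfolding t_def S_def using qP qP2 D1b D2b by auto
  have "gfun w = Gf t"
  proof
    fix u
    show "gfun w u = Gf t u"
    proof (cases "fib_valid u \<and> \<not> (bw \<and> u \<noteq> [] \<and> hd u)")
      case False
      then have "\<not> fib_valid (w @ u)" unfolding bw_def fib_valid_append by auto
      have c0: "(fib_valid u \<and> \<not> (bw \<and> u \<noteq> [] \<and> hd u)) = False" using False by simp
      have "Gf t u = None" unfolding Gf_def t_def by (simp only: prod.case c0 if_False)
      then show ?thesis using \<open>\<not> fib_valid (w @ u)\<close> unfolding gfun_def by simp
    next
      case True
      then have vu: "fib_valid u" and vwu: "fib_valid (w @ u)" using vw unfolding bw_def fib_valid_append by auto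
      define r where "r = length u"
      define L where "L = Suc j + r"
      define Off where "Off = D1 * (fib (Suc r) - fib r) + D2 * fib r + n * fib_val u + c"
      define Y where "Y = n * fib_val (w @ u) + c"
      define Z where "Z = fib_val (P @ replicate L False)"
      have GfE: "Gf t u = (if Off < (if bP then fib (Suc L) else fib (Suc (Suc L)))
           then map_option \<tau> (run \<delta> qP (if bP then False # rep (L - 1) Off else rep L Off))
           else map_option \<tau> (run \<delta> qP2 (False # rep (L - 1) (Off - (fib (Suc L) + (if e then fib L else 0))))))"
      proof -
        have c1: "(fib_valid u \<and> \<not> (bw \<and> u \<noteq> [] \<and> hd u)) = True" using True by simp
        show ?thesis unfolding Gf_def t_def prod.case c1 if_True Let_def r_def[symmetric]
            L_def[symmetric] Off_def[symmetric] by (rule refl)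
      qed
      have gE: "gfun w u = Some (h Y)" unfolding gfun_def Y_def using vwu by simp
      have L1: "1 \<le> L" unfolding L_def by simp
      have Ze: "Z = fib_val P * fib (Suc L) + fvp P * fib L" unfolding Z_def fib_val_append by simp
      have FA: "fib r \<le> fib (Suc r)" by (rule fib_Suc_mono)
      have FSL: "fib (Suc L) = fib (Suc (Suc j)) * fib (Suc r) + fib (Suc j) * fib r"
        using fib_add[of r "Suc j"] unfolding L_def by (simp add: ac_simps)
      have FL: "fib L = fib (Suc j) * fib (Suc r) + fib j * fib r"
        using fib_add[of r j] unfolding L_def by (simp add: ac_simps)
      have F3: "fib (Suc (Suc (Suc j))) = fib (Suc (Suc j)) + fib (Suc j)"
        and F2: "fib (Suc (Suc j)) = fib (Suc j) + fib j" by (simp_all add: fib.simps)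
      have X1: "fib_val (P @ replicate (Suc j) False) = fib_val P * fib (Suc (Suc j)) + fvp P * fib (Suc j)"
        unfolding fib_val_append by simp
      have X2: "fib_val (P @ replicate (Suc (Suc j)) False) = fib_val P * fib (Suc (Suc (Suc j))) + fvp P * fib (Suc (Suc j))"
        unfolding fib_val_append by simp
      have Wu: "fib_val (w @ u) = fib_val w * fib (Suc r) + fvp w * fib r + fib_val u"
        unfolding fib_val_append r_def by simp
      have W0: "fib_val (w @ [False]) = fib_val w + fvp w" by (simp add: fib_val_snoc)
      have YZ: "Y = Z + Off"
      proof -
        have i1: "int D1 = int n * int (fib_val w) - (int (fib_val P) * int (fib (Suc (Suc j))) + int (fvp P) * int (fib (Suc j)))"
          using D1e X1 by simp
        have i2: "int n * (int (fib_val w) + int (fvp w)) = int (fib_val P) * int (fib (Suc (Suc (Suc j)))) + int (fvp P) * int (fib (Suc (Suc j))) + int D2"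
          using arg_cong[OF D2e, of int] X2 W0 by simp
        have iO: "int Off = int D1 * (int (fib (Suc r)) - int (fib r)) + int D2 * int (fib r) + int n * int (fib_val u) + int c"
          unfolding Off_def using FA by (simp add: of_nat_diff)
        have iY: "int Y = int n * (int (fib_val w) * int (fib (Suc r)) + int (fvp w) * int (fib r) + int (fib_val u)) + int c"
          unfolding Y_def Wu by simp
        have iZ: "int Z = int (fib_val P) * int (fib (Suc L)) + int (fvp P) * int (fib L)"
          unfolding Ze by simp
        have iFSL: "int (fib (Suc L)) = int (fib (Suc (Suc j))) * int (fib (Suc r)) + int (fib (Suc j)) * int (fib r)"
          using FSL by simp
        have iFL: "int (fib L) = int (fib (Suc j)) * int (fib (Suc r)) + int (fib j) * int (fib r)"
          using FL by simp
        have iF3: "int (fib (Suc (Suc (Suc j)))) = int (fib (Suc (Suc j))) + int (fib (Suc j))" using F3 by simp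
        have iF2: "int (fib (Suc (Suc j))) = int (fib (Suc j)) + int (fib j)" using F2 by simp
        have "int Y = int Z + int Off"
          unfolding iY iZ iO iFSL iFL using i1 i2 iF3 iF2 by algebra
        then show ?thesis by simp
      qed
      have Obound: "Off < 2 * fib (Suc L)"
      proof -
        define A where "A = fib (Suc r)"
        define B where "B = fib r"
        define dd where "dd = A - B"
        have AB: "A = dd + B" unfolding dd_def A_def B_def using FA by simp
        have vub: "fib_val u < A + B" using val_bound[OF vu] unfolding A_def B_def r_def
          by (simp add: fib.simps)
        have "n * fib_val u \<le> n * (A + B - 1)" using vub by (intro mult_left_mono) auto
        moreover obtain kk where kk: "A + B = Suc kk" using vub by (cases "A + B") auto
        moreover have "n * (A + B) = n * dd + 2 * n * B" using AB by (simp add: algebra_simps)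
        ultimately have nu: "n * fib_val u + c < n * dd + 2 * n * B"
        proof -
          assume a1: "n * fib_val u \<le> n * (A + B - 1)" and a2: "A + B = Suc kk"
            and a3: "n * (A + B) = n * dd + 2 * n * B"
          have "n * fib_val u \<le> n * kk" using a1 a2 by simp
          moreover have "n * (A + B) = n * kk + n" using a2 by simp
          ultimately show ?thesis using a3 cn by linarith
        qed
        have m1: "(D1 + n) * dd \<le> (2 * fib (j + 2)) * dd" using D1b by (rule mult_right_mono) simp
        have m2: "(D2 + 2 * n) * B \<le> (2 * fib (j + 3)) * B" using D2b by (rule mult_right_mono) simp
        have OffE: "Off = D1 * dd + D2 * B + n * fib_val u + c" unfolding Off_def dd_def A_def B_def by simp
        have "Off < (D1 + n) * dd + (D2 + 2 * n) * B" unfolding OffE using nu by (simp add: algebra_simps)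
        also have "\<dots> \<le> (2 * fib (j + 2)) * dd + (2 * fib (j + 3)) * B" by (rule add_mono[OF m1 m2])
        also have "\<dots> = 2 * fib (Suc L)"
        proof -
          have AB': "fib (Suc r) = dd + fib r" using AB unfolding A_def B_def .
          show ?thesis unfolding FSL B_def using AB' F3 by (simp add: numeral_eq_Suc algebra_simps)
        qed
        finally show ?thesis .
      qed
      have vPr: "fib_val (P @ R) = Z + fib_val R" if "length R = L" for R
        unfolding fib_val_append Ze that by simp
      have vP2r: "fib_val (P2 @ R) = Z + fib (Suc L) + (if e then fib L else 0) + fib_val R" if "length R = L" for R
        unfolding fib_val_append Ze that P2(2,3) by (simp add: algebra_simps)
      have runP: "run \<delta> q0 (P @ R) = run \<delta> qP R" for R unfolding run_append qP by simp
      have runP2: "run \<delta> q0 (P2 @ R) = run \<delta> qP2 R" for R unfolding run_append qP2 by simp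
      show ?thesis
      proof (cases "Off < (if bP then fib (Suc L) else fib (Suc (Suc L)))")
        case True
        define R where "R = (if bP then False # rep (L - 1) Off else rep L Off)"
        have R: "length R = L" "fib_valid (P @ R)" "fib_val R = Off"
        proof -
          have "length R = L \<and> fib_valid (P @ R) \<and> fib_val R = Off"
          proof (cases bP)
            case b: True
            then have "Off < fib ((L - 1) + 2)" using True L1 by simp
            from rep_prop[OF this] show ?thesis unfolding R_def using b L1 P
              by (auto simp: fib_valid_append fib_valid_Cons fib_val_Cons)
          next
            case b: False
            then have "Off < fib (L + 2)" using True by simp
            from rep_prop[OF this] show ?thesis unfolding R_def using b P bP_def
              by (auto simp: fib_valid_append)
          qed
          then show "length R = L" "fib_valid (P @ R)" "fib_val R = Off" by auto
        qed
        have "map_option \<tau> (run \<delta> q0 (P @ R)) = Some (h (fib_val (P @ R)))"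
          using run_valid[OF R(2)] by blast
        then have X: "map_option \<tau> (run \<delta> qP R) = Some (h Y)"
          unfolding runP vPr[OF R(1)] R(3) YZ .
        show ?thesis unfolding GfE gE if_P[OF True] R_def[symmetric] by (simp only: X)
      next
        case False
        define Dl where "Dl = fib (Suc L) + (if e then fib L else 0)"
        define R where "R = False # rep (L - 1) (Off - Dl)"
        have FSSL: "fib (Suc (Suc L)) = fib (Suc L) + fib L" by (simp add: fib.simps)
        have Dle: "Dl \<le> Off" using False P2(4) FSSL unfolding Dl_def bP_def by (auto split: if_splits)
        have Dlu: "Off - Dl < fib ((L - 1) + 2)" using Obound L1 unfolding Dl_def by auto
        have R: "length R = L" "fib_valid (P2 @ R)" "fib_val R = Off - Dl"
          using rep_prop[OF Dlu] L1 P2(1) unfolding R_def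
          by (auto simp: fib_valid_append fib_valid_Cons fib_val_Cons)
        have "map_option \<tau> (run \<delta> q0 (P2 @ R)) = Some (h (fib_val (P2 @ R)))"
          using run_valid[OF R(2)] by blast
        moreover have "fib_val (P2 @ R) = Y" unfolding vP2r[OF R(1)] R(3) YZ using Dle unfolding Dl_def by simp
        ultimately have X: "map_option \<tau> (run \<delta> qP2 R) = Some (h Y)" unfolding runP2 by simp
        show ?thesis unfolding GfE gE if_not_P[OF False] Dl_def[symmetric] R_def[symmetric] by (simp only: X)
      qed
    qed
  qed
  then show ?thesis using tS by blast
qed


lemma val0_rep: "fib_val w = 0 \<Longrightarrow> w = replicate (length w) False"
proof (induction w)
  case (Cons a w)
  have "0 < fib (Suc (Suc (length w)))" by (rule fib_neq_0_nat) simp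
  then show ?case using Cons by (auto simp: fib_val_Cons replicate_Suc split: if_splits)
qed simp

lemma gfun_range: "range gfun \<subseteq> insert (\<lambda>u. None) (insert (gfun []) (Gf ` S))"
proof
  fix g assume "g \<in> range gfun"
  then obtain w where g: "g = gfun w" by blast
  show "g \<in> insert (\<lambda>u. None) (insert (gfun []) (Gf ` S))"
  proof (cases "fib_valid w")
    case False
    then have "gfun w = (\<lambda>u. None)" unfolding gfun_def by (auto simp: fib_valid_append)
    then show ?thesis using g by simp
  next
    case True
    show ?thesis
    proof (cases "fib_val w = 0")
      case z: True
      have "w = replicate (length w) False @ []" using val0_rep[OF z] by simp
      then have "gfun w = gfun []" unfolding gfun_def
        by (metis append_assoc rep0_val rep0_valid)
      then show ?thesis using g by simp
    next
      case False
      then show ?thesis using main[OF True] g by auto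
    qed
  qed
qed

lemma finS: "finite S" unfolding S_def using finQ by simp

lemma cardS: "card S = card Q * (card Q * (2 * (2 * (2 * (Suc (2 * fib (j + 2)) * Suc (2 * fib (j + 3)))))))"
  by (simp only: S_def card_cartesian_product card_UNIV_bool card_atMost)

lemma gfun_card: "finite (range gfun) \<and> card (range gfun) \<le> card S + 2"
proof -
  have f: "finite (insert (\<lambda>u. None) (insert (gfun []) (Gf ` S)))" using finS by simp
  have "card (insert (\<lambda>u. None) (insert (gfun []) (Gf ` S))) \<le> card (Gf ` S) + 2"
    using finS by (simp add: card_insert_if)
  moreover have "card (Gf ` S) \<le> card S" by (rule card_image_le[OF finS])
  ultimately show ?thesis using card_mono[OF f gfun_range] finite_subset[OF gfun_range f] by simp
qed

definition repr :: "(bool list \<Rightarrow> 'o option) \<Rightarrow> bool list" where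
  "repr g = (SOME w. gfun w = g)"

definition st :: "bool list \<Rightarrow> nat" where
  "st w = to_nat (repr (gfun w))"

definition dl :: "nat \<Rightarrow> bool \<Rightarrow> nat option" where
  "dl q a = Some (st (from_nat q @ [a]))"

definition tl' :: "nat \<Rightarrow> 'o" where
  "tl' q = the (gfun (from_nat q) [])"

lemma repr_gfun: "gfun (repr (gfun w)) = gfun w"
  unfolding repr_def by (rule someI_ex) blast

lemma gfun_snoc: "gfun (x @ [a]) = (\<lambda>u. gfun x (a # u))"
  unfolding gfun_def append_assoc append_Cons append_Nil by (rule refl)

lemma dl_st: "dl (st x) a = Some (st (x @ [a]))"
proof -
  have "gfun (repr (gfun x) @ [a]) = gfun (x @ [a])" unfolding gfun_snoc repr_gfun ..
  then show ?thesis unfolding dl_def st_def by simp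
qed

lemma run_st: "run dl (st x) w = Some (st (x @ w))"
  by (induction w arbitrary: x) (simp_all add: dl_st)

lemma st_zeros: "st (replicate i False @ x) = st x"
proof -
  have "gfun (replicate i False @ x) = gfun x" unfolding gfun_def
    by (metis append_assoc rep0_val rep0_valid)
  then show ?thesis unfolding st_def by simp
qed

lemma new_dfao: "fib_dfao (range st) dl (st []) tl'"
  unfolding fib_dfao_def
proof (intro conjI allI impI ballI)
  have "range st = (to_nat \<circ> repr) ` range gfun" unfolding st_def by auto
  then show "finite (range st)" using gfun_card by simp
  show "st [] \<in> range st" by simp
  fix q a q' assume "q \<in> range st" "dl q a = Some q'"
  then show "q' \<in> range st" using dl_st by auto
next
  fix x k
  show "map_option tl' (run dl (st []) (replicate k False @ x)) = map_option tl' (run dl (st []) x)"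
    unfolding run_st using st_zeros by simp
qed

lemma new_gen: "fib_generates dl (st []) tl' (\<lambda>i. h (n * i + c))"
  unfolding fib_generates_def
proof (intro allI impI)
  fix x assume "fib_valid x"
  have "tl' (st x) = the (gfun x [])" unfolding tl'_def st_def by (simp add: repr_gfun)
  also have "\<dots> = h (n * fib_val x + c)" unfolding gfun_def using \<open>fib_valid x\<close> by simp
  finally show "map_option tl' (run dl (st []) x) = Some (h (n * fib_val x + c))"
    unfolding run_st by simp
qed

lemma new_card: "card (range st) \<le> card S + 2"
proof -
  have "range st = (to_nat \<circ> repr) ` range gfun" unfolding st_def by auto
  then have "card (range st) \<le> card (range gfun)" using card_image_le gfun_card by metis
  then show ?thesis using gfun_card by linarith
qed

end



lemma fib_between: "1 \<le> N \<Longrightarrow> \<exists>j. N \<le> fib j \<and> fib j \<le> 2 * N"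
proof -
  assume N: "1 \<le> N"
  have ex: "\<exists>j. N \<le> fib j" using fib_ge[of N] by (intro exI[of _ "Suc (Suc N)"]) simp
  define j where "j = (LEAST j. N \<le> fib j)"
  have jN: "N \<le> fib j" unfolding j_def by (rule LeastI_ex[OF ex])
  have "fib j \<le> 2 * N"
  proof (cases j)
    case 0 then show ?thesis using jN N by simp
  next
    case (Suc i)
    show ?thesis
    proof (cases i)
      case 0 then show ?thesis using Suc N by simp
    next
      case (Suc i')
      have "Suc i' < j" using \<open>j = Suc i\<close> Suc by simp
      then have l1: "\<not> N \<le> fib (Suc i')" unfolding j_def by (rule not_less_Least)
      have l2: "fib i' \<le> fib (Suc i')" by (rule fib_Suc_mono)
      have "fib j = fib i' + fib (Suc i')" using \<open>j = Suc i\<close> Suc by (simp add: fib.simps)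
      then show ?thesis using l1 l2 by linarith
    qed
  qed
  then show ?thesis using jN by blast
qed

theorem theorem17:
  shows "\<exists>K::real. \<forall>(n::nat) (c::nat) (m::nat) (h :: nat \<Rightarrow> 'o)
            (Q :: nat set) \<delta> q0 (\<tau> :: nat \<Rightarrow> 'o).
     n \<ge> 1 \<longrightarrow> c < n \<longrightarrow> fib_dfao Q \<delta> q0 \<tau> \<longrightarrow> card Q = m \<longrightarrow>
     fib_generates \<delta> q0 \<tau> h \<longrightarrow>
     (\<exists>(Q' :: nat set) \<delta>' q0' (\<tau>' :: nat \<Rightarrow> 'o).
        fib_dfao Q' \<delta>' q0' \<tau>' \<and> real (card Q') \<le> K * real m ^ 2 * real n ^ 4 \<and>
        fib_generates \<delta>' q0' \<tau>' (\<lambda>i. h (n * i + c)))"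
proof (rule exI[of _ 20000], intro allI impI)
  fix n c m :: nat and h :: "nat \<Rightarrow> 'o" and Q :: "nat set" and \<delta> q0 and \<tau> :: "nat \<Rightarrow> 'o"
  assume n1: "n \<ge> 1" and cn: "c < n" and dfao: "fib_dfao Q \<delta> q0 \<tau>" and cQ: "card Q = m"
    and gen: "fib_generates \<delta> q0 \<tau> h"
  obtain j where j1: "3 * n \<le> fib j" and j2: "fib j \<le> 2 * (3 * n)"
    using fib_between[of "3 * n"] n1 by auto
  interpret fs: fsetup Q \<delta> q0 \<tau> h n c j
    using dfao gen n1 cn j1 j2 by unfold_locales auto
  have m1: "1 \<le> m" using fs.finQ fs.q0Q cQ by (metis One_nat_def Suc_leI card_gt_0_iff empty_iff)
  have "0 < j" using j1 n1 by (cases j) auto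
  then obtain i where i: "j = Suc i" by (cases j) auto
  have f1: "fib (j + 1) \<le> 2 * fib j"
    using fib_Suc_mono[of i] i by (simp add: fib.simps)
  have f2: "fib (j + 2) = fib (j + 1) + fib j" and f3: "fib (j + 3) = fib (j + 2) + fib (j + 1)"
    by (simp_all add: fib.simps numeral_eq_Suc)
  have a: "Suc (2 * fib (j + 2)) \<le> 37 * n" using f1 f2 j2 n1 by linarith
  have b: "Suc (2 * fib (j + 3)) \<le> 61 * n" using f1 f2 f3 j2 n1 by linarith
  have "Suc (2 * fib (j + 2)) * Suc (2 * fib (j + 3)) \<le> (37 * n) * (61 * n)"
    by (rule mult_le_mono[OF a b])
  then have "card fs.S \<le> m * (m * (2 * (2 * (2 * ((37 * n) * (61 * n))))))"
    unfolding fs.cardS cQ by (intro mult_le_mono2) simp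
  moreover have "m * (m * (2 * (2 * (2 * ((37 * n) * (61 * n)))))) = 18056 * (m * m * (n * n))"
    by (simp add: algebra_simps)
  moreover have "1 \<le> m * m * (n * n)" using m1 n1 by (simp add: Suc_le_eq)
  ultimately have "card (range fs.st) \<le> 18058 * (m * m * (n * n))"
    using fs.new_card by linarith
  also have "\<dots> \<le> 20000 * (m * m * (n * n * (n * n)))"
  proof -
    have "n * n \<le> n * n * (n * n)" using n1 by simp
    then show ?thesis by (intro mult_le_mono mult_le_mono2) auto
  qed
  finally have "real (card (range fs.st)) \<le> real (20000 * (m * m * (n * n * (n * n))))" by linarith
  then have "real (card (range fs.st)) \<le> 20000 * real m ^ 2 * real n ^ 4"
    by (simp add: power2_eq_square power4_eq_xxxx algebra_simps)
  then show "\<exists>(Q' :: nat set) \<delta>' q0' (\<tau>' :: nat \<Rightarrow> 'o).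
        fib_dfao Q' \<delta>' q0' \<tau>' \<and> real (card Q') \<le> 20000 * real m ^ 2 * real n ^ 4 \<and>
        fib_generates \<delta>' q0' \<tau>' (\<lambda>i. h (n * i + c))"
    using fs.new_dfao fs.new_gen by blast
qed


end
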